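(* Let $\vartheta_1,\ldots,\vartheta_t$ be real numbers, $d$ a positive integer, $\tau_1,\tau_2$ positive real numbers, and $\sigma$ a non-decreasing positive function on the positive integers with $\lim_{n\to\infty}\sigma(n)=\infty$. Assume there is a sequence $(P_n)_{n\ge0}$ of polynomials in $\mathbb{Z}[X_1,\ldots,X_t]$, with $P_n$ of total degree at most $d$ and length at most $e^{\sigma(n)}$, such that $$e^{-(\tau_1+o(1))\sigma(n)}\le|P_n(\vartheta_1,\ldots,\vartheta_t)|\le e^{-(\tau_2+o(1))\sigma(n+1)}$$ as $n\to\infty$. Then $$\tau_2\le\left(\binom{d+t}{t}-1\right)(1+\tau_1-\tau_2).$$
   Context: The length of a polynomial with integer coefficients is the sum of the absolute values of its coefficients. $o(1)$ denotes quantities tending to $0$ as $n\to\infty$. *)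

theory Defs
  imports Complex_Main
begin

text \<open>Integer polynomials in t variables X_0..X_(t-1) are represented by their
coefficient functions on exponent vectors (nat \<Rightarrow> nat), i.e. c :: (nat \<Rightarrow> nat) \<Rightarrow> int.\<close>

definition monomials :: "nat \<Rightarrow> nat \<Rightarrow> (nat \<Rightarrow> nat) set" where
  "monomials t d = {\<alpha>. (\<forall>i\<ge>t. \<alpha> i = 0) \<and> (\<Sum>i<t. \<alpha> i) \<le> d}"

definition is_mpoly_deg :: "nat \<Rightarrow> nat \<Rightarrow> ((nat \<Rightarrow> nat) \<Rightarrow> int) \<Rightarrow> bool" where
  "is_mpoly_deg t d c \<longleftrightarrow> (\<forall>\<alpha>. \<alpha> \<notin> monomials t d \<longrightarrow> c \<alpha> = 0)"

definition mpoly_eval :: "nat \<Rightarrow> nat \<Rightarrow> ((nat \<Rightarrow> nat) \<Rightarrow> int) \<Rightarrow> (nat \<Rightarrow> real) \<Rightarrow> real" where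
  "mpoly_eval t d c \<theta> = (\<Sum>\<alpha>\<in>monomials t d. real_of_int (c \<alpha>) * (\<Prod>i<t. \<theta> i ^ \<alpha> i))"

definition mpoly_length :: "nat \<Rightarrow> nat \<Rightarrow> ((nat \<Rightarrow> nat) \<Rightarrow> int) \<Rightarrow> int" where
  "mpoly_length t d c = (\<Sum>\<alpha>\<in>monomials t d. \<bar>c \<alpha>\<bar>)"

end

theory Submission imports Defs "HOL-Library.FuncSet" begin


lemma monomials_Suc:
  "monomials (Suc t) d = (\<lambda>(k,\<beta>). \<beta>(t:=k)) ` (SIGMA k:{..d}. monomials t (d-k))"
proof (rule set_eqI, rule iffI)
  fix \<alpha> assume a: "\<alpha> \<in> monomials (Suc t) d"
  have s: "(\<Sum>i<Suc t. \<alpha> i) = (\<Sum>i<t. \<alpha> i) + \<alpha> t" by simp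
  have z: "\<forall>i\<ge>Suc t. \<alpha> i = 0" and le: "(\<Sum>i<Suc t. \<alpha> i) \<le> d" using a by (auto simp: monomials_def)
  have "(\<Sum>i<t. (\<alpha>(t:=0)) i) = (\<Sum>i<t. \<alpha> i)" by (rule sum.cong) auto
  then have "\<alpha>(t:=0) \<in> monomials t (d - \<alpha> t)" using z le s
    unfolding monomials_def by (simp add: le_diff_conv2)
  moreover have "\<alpha> t \<in> {..d}" using le s by simp
  moreover have "\<alpha> = (\<lambda>(k,\<beta>). \<beta>(t:=k)) (\<alpha> t, \<alpha>(t:=0))" by simp
  ultimately show "\<alpha> \<in> (\<lambda>(k,\<beta>). \<beta>(t:=k)) ` (SIGMA k:{..d}. monomials t (d-k))"
    by (intro image_eqI[where x="(\<alpha> t, \<alpha>(t:=0))"]) auto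
next
  fix \<alpha> assume "\<alpha> \<in> (\<lambda>(k,\<beta>). \<beta>(t:=k)) ` (SIGMA k:{..d}. monomials t (d-k))"
  then obtain k \<beta> where k: "k \<le> d" and b: "\<beta> \<in> monomials t (d-k)" and al: "\<alpha> = \<beta>(t:=k)" by auto
  have "(\<Sum>i<t. \<alpha> i) = (\<Sum>i<t. \<beta> i)" unfolding al by (rule sum.cong) auto
  then show "\<alpha> \<in> monomials (Suc t) d" using b k unfolding al by (auto simp: monomials_def)
qed

lemma monomials_card: "finite (monomials t d) \<and> card (monomials t d) = (d + t) choose t"
proof (induction t arbitrary: d)
  case 0
  have "monomials 0 d = {\<lambda>_. 0}" by (auto simp: monomials_def)
  then show ?case by simp
next
  case (Suc t)
  have inj: "inj_on (\<lambda>(k,\<beta>). \<beta>(t:=k)) (SIGMA k:{..d}. monomials t (d-k))"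
  proof (rule inj_onI, clarsimp)
    fix k \<beta> k' \<beta>' assume "\<beta> \<in> monomials t (d-k)" "\<beta>' \<in> monomials t (d-k')" and e: "\<beta>(t:=k) = \<beta>'(t:=k')"
    then have "\<beta> t = 0" "\<beta>' t = 0" by (auto simp: monomials_def)
    moreover have "k = k'" using fun_cong[OF e, of t] by simp
    moreover have "\<forall>i. i \<noteq> t \<longrightarrow> \<beta> i = \<beta>' i" using e by (metis fun_upd_other)
    ultimately show "k = k' \<and> \<beta> = \<beta>'" by (metis ext)
  qed
  have fin: "finite (SIGMA k:{..d}. monomials t (d-k))" using Suc by auto
  have "card (monomials (Suc t) d) = card (SIGMA k:{..d}. monomials t (d-k))"
    unfolding monomials_Suc by (rule card_image[OF inj])
  also have "\<dots> = (\<Sum>k\<le>d. (d - k + t) choose t)" using Suc by (simp add: card_SigmaI)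
  also have "\<dots> = (\<Sum>k\<le>d. (t + k) choose k)"
  proof -
    have "(\<Sum>k\<le>d. (d - k + t) choose t) = (\<Sum>k\<le>d. (k + t) choose t)"
      by (rule sum.reindex_bij_witness[of _ "\<lambda>k. d - k" "\<lambda>k. d - k"]) (simp_all add: atMost_iff)
    also have "\<dots> = (\<Sum>k\<le>d. (t + k) choose k)"
      proof (rule sum.cong[OF refl])
      fix k show "(k + t) choose t = (t + k) choose k"
        using binomial_symmetric[of t "k+t"] by (simp add: add.commute)
    qed
    finally show ?thesis .
  qed
  also have "\<dots> = Suc (t + d) choose d" by (rule sum_choose_lower)
  also have "\<dots> = (d + Suc t) choose Suc t"
    using binomial_symmetric[of d "Suc (t+d)"] by (simp add: add.commute)
  finally show ?case using fin monomials_Suc by simp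
qed


lemma floor_close:
  fixes Q x y :: real
  assumes "\<lfloor>Q*x\<rfloor> = \<lfloor>Q*y\<rfloor>" "Q > 0"
  shows "\<bar>x - y\<bar> \<le> 1 / Q"
proof -
  have "\<bar>Q*x - Q*y\<bar> < 1" using assms(1) by linarith
  then have "Q * \<bar>x - y\<bar> \<le> 1" using assms(2) by (simp add: abs_mult right_diff_distrib[symmetric])
  then show ?thesis using assms(2) by (simp add: field_simps)
qed

lemma dirichlet:
  fixes I :: "'a set" and f :: "'a \<Rightarrow> real" and Q :: nat
  assumes fin: "finite I" and Q: "Q \<ge> 1"
  shows "\<exists>q::nat. 1 \<le> q \<and> q \<le> Q ^ card I \<and> (\<exists>A::'a\<Rightarrow>int. \<forall>i\<in>I. \<bar>real q * f i - A i\<bar> \<le> 1 / Q)"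
proof -
  define g where "g = (\<lambda>q::nat. \<lambda>i\<in>I. \<lfloor>real Q * frac (real q * f i)\<rfloor>)"
  have img: "g ` {0..Q^card I} \<subseteq> PiE I (\<lambda>_. {0..<int Q})"
  proof
    fix z assume "z \<in> g ` {0..Q^card I}"
    then obtain q where z: "z = g q" by auto
    have "\<And>i. 0 \<le> \<lfloor>real Q * frac (real q * f i)\<rfloor>" by (simp add: frac_ge_0)
    moreover have "\<And>i. \<lfloor>real Q * frac (real q * f i)\<rfloor> < int Q"
    proof -
      fix i
      have "real Q * frac (real q * f i) < real Q" using Q frac_lt_1[of "real q * f i"] by simp
      then show "\<lfloor>real Q * frac (real q * f i)\<rfloor> < int Q" by linarith
    qed
    ultimately show "z \<in> PiE I (\<lambda>_. {0..<int Q})" unfolding z g_def by auto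
  qed
  have cardB: "card (PiE I (\<lambda>_. {0..<int Q})) = Q ^ card I" by (simp add: card_PiE fin)
  have "\<not> inj_on g {0..Q^card I}"
  proof
    assume "inj_on g {0..Q^card I}"
    then have "card {0..Q^card I} \<le> card (PiE I (\<lambda>_. {0..<int Q}))"
      by (rule card_inj_on_le[OF _ img]) (simp add: finite_PiE fin)
    then show False using cardB by simp
  qed
  then obtain q1 q2 where q: "q1 \<le> Q^card I" "q2 \<le> Q^card I" "q1 \<noteq> q2" "g q1 = g q2"
    unfolding inj_on_def by auto
  have main: "\<exists>q::nat. 1 \<le> q \<and> q \<le> Q ^ card I \<and> (\<exists>A::'a\<Rightarrow>int. \<forall>i\<in>I. \<bar>real q * f i - A i\<bar> \<le> 1 / Q)"
    if "a < b" "b \<le> Q^card I" "g a = g b" for a b :: nat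
  proof (intro exI conjI)
    show "1 \<le> b - a" "b - a \<le> Q ^ card I" using that by auto
    show "\<forall>i\<in>I. \<bar>real (b - a) * f i - real_of_int (\<lfloor>real b * f i\<rfloor> - \<lfloor>real a * f i\<rfloor>)\<bar> \<le> 1 / Q"
    proof
      fix i assume i: "i \<in> I"
      have "\<lfloor>real Q * frac (real b * f i)\<rfloor> = \<lfloor>real Q * frac (real a * f i)\<rfloor>"
        using fun_cong[OF that(3), of i] i unfolding g_def by simp
      then have "\<bar>frac (real b * f i) - frac (real a * f i)\<bar> \<le> 1 / Q"
        using Q by (intro floor_close) auto
      moreover have "frac (real b * f i) - frac (real a * f i) = real (b - a) * f i - real_of_int (\<lfloor>real b * f i\<rfloor> - \<lfloor>real a * f i\<rfloor>)"
        using that(1) by (simp add: frac_def of_nat_diff left_diff_distrib)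
      ultimately show "\<bar>real (b - a) * f i - real_of_int (\<lfloor>real b * f i\<rfloor> - \<lfloor>real a * f i\<rfloor>)\<bar> \<le> 1 / Q" by simp
    qed
  qed
  show ?thesis
  proof (cases "q1 < q2")
    case True then show ?thesis using main q by blast
  next
    case False then have "q2 < q1" using q by simp
    then show ?thesis using main q by metis
  qed
qed

theorem mainTheorem4:
  fixes \<theta> :: "nat \<Rightarrow> real" and t d :: nat and \<tau>1 \<tau>2 :: real
    and \<sigma> :: "nat \<Rightarrow> real" and P :: "nat \<Rightarrow> (nat \<Rightarrow> nat) \<Rightarrow> int"
    and \<epsilon>1 \<epsilon>2 :: "nat \<Rightarrow> real"
  assumes d_pos: "d > 0"
    and tau_pos: "\<tau>1 > 0" "\<tau>2 > 0"
    and sigma_pos: "\<forall>n\<ge>1. \<sigma> n > 0"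
    and sigma_mono: "\<forall>m n. 1 \<le> m \<longrightarrow> m \<le> n \<longrightarrow> \<sigma> m \<le> \<sigma> n"
    and sigma_lim: "filterlim \<sigma> at_top sequentially"
    and P_deg: "\<forall>n. is_mpoly_deg t d (P n)"
    and P_len: "\<forall>n\<ge>1. real_of_int (mpoly_length t d (P n)) \<le> exp (\<sigma> n)"
    and eps1: "\<epsilon>1 \<longlonglongrightarrow> 0" and eps2: "\<epsilon>2 \<longlonglongrightarrow> 0"
    and bounds: "\<forall>\<^sub>F n in sequentially.
        exp (- (\<tau>1 + \<epsilon>1 n) * \<sigma> n) \<le> \<bar>mpoly_eval t d (P n) \<theta>\<bar> \<and>
        \<bar>mpoly_eval t d (P n) \<theta>\<bar> \<le> exp (- (\<tau>2 + \<epsilon>2 n) * \<sigma> (n + 1))"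
  shows "\<tau>2 \<le> (real ((d + t) choose t) - 1) * (1 + \<tau>1 - \<tau>2)"
proof -
  define M where "M = monomials t d"
  define x where "x = (\<lambda>\<alpha>::nat\<Rightarrow>nat. \<Prod>i<t. \<theta> i ^ \<alpha> i)"
  define z where "z = (\<lambda>_::nat. 0::nat)"
  define L where "L = (\<lambda>n. mpoly_eval t d (P n) \<theta>)"
  have finM: "finite M" and cardM: "card M = (d + t) choose t"
    using monomials_card[of t d] by (auto simp: M_def)
  have zM: "z \<in> M" by (simp add: M_def z_def monomials_def)
  have xz: "x z = 1" by (simp add: x_def z_def)
  define K where "K = card M - 1"
  have cardI: "card (M - {z}) = K" using finM zM by (simp add: K_def card_Diff_singleton)
  have finI: "finite (M - {z})" using finM by simp
  have L_eq: "L n = (\<Sum>\<alpha>\<in>M. real_of_int (P n \<alpha>) * x \<alpha>)" for n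
    by (simp add: L_def mpoly_eval_def M_def x_def)
  have len: "(\<Sum>\<alpha>\<in>M. real_of_int \<bar>P n \<alpha>\<bar>) \<le> exp (\<sigma> n)" if "n \<ge> 1" for n
    using P_len that by (simp add: mpoly_length_def M_def)

  have le12: "\<tau>2 \<le> \<tau>1"
  proof -
    have ev2: "\<forall>\<^sub>F n in sequentially. \<tau>2 + \<epsilon>2 n > 0"
      using eps2 tau_pos(2) by (auto intro!: order_tendstoD(1) tendsto_add_const_iff[THEN iffD2] 
          intro: tendsto_eq_intros)
    have "\<forall>\<^sub>F n in sequentially. \<tau>2 + \<epsilon>2 n \<le> \<tau>1 + \<epsilon>1 n"
      using eventually_conj[OF eventually_conj[OF bounds ev2] eventually_ge_at_top[of 1]]
    proof (rule eventually_mono)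
      fix n assume h: "((exp (- (\<tau>1 + \<epsilon>1 n) * \<sigma> n) \<le> \<bar>mpoly_eval t d (P n) \<theta>\<bar> \<and>
        \<bar>mpoly_eval t d (P n) \<theta>\<bar> \<le> exp (- (\<tau>2 + \<epsilon>2 n) * \<sigma> (n + 1))) \<and> \<tau>2 + \<epsilon>2 n > 0) \<and> n \<ge> 1"
      then have "exp (- (\<tau>1 + \<epsilon>1 n) * \<sigma> n) \<le> exp (- (\<tau>2 + \<epsilon>2 n) * \<sigma> (n + 1))" by linarith
      then have "- (\<tau>1 + \<epsilon>1 n) * \<sigma> n \<le> - (\<tau>2 + \<epsilon>2 n) * \<sigma> (n + 1)"
        by (simp only: exp_le_cancel_iff)
      then have e: "(\<tau>2 + \<epsilon>2 n) * \<sigma> (n + 1) \<le> (\<tau>1 + \<epsilon>1 n) * \<sigma> n"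
        by (simp only: mult_minus_left neg_le_iff_le)
      have sp: "\<sigma> n > 0" using sigma_pos h by auto
      have "\<sigma> n \<le> \<sigma> (n+1)" using sigma_mono h by auto
      then have "(\<tau>2 + \<epsilon>2 n) * \<sigma> n \<le> (\<tau>2 + \<epsilon>2 n) * \<sigma> (n + 1)"
        using h by (intro mult_left_mono) auto
      with e have "(\<tau>2 + \<epsilon>2 n) * \<sigma> n \<le> (\<tau>1 + \<epsilon>1 n) * \<sigma> n" by linarith
      then show "\<tau>2 + \<epsilon>2 n \<le> \<tau>1 + \<epsilon>1 n" using sp by simp
    qed
    moreover have "(\<lambda>n. \<tau>2 + \<epsilon>2 n) \<longlonglongrightarrow> \<tau>2" using eps2 by (auto intro: tendsto_eq_intros)
    moreover have "(\<lambda>n. \<tau>1 + \<epsilon>1 n) \<longlonglongrightarrow> \<tau>1" using eps1 by (auto intro: tendsto_eq_intros)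
    ultimately show ?thesis by (intro tendsto_le[of sequentially]) auto
  qed

  have main: "\<tau>2 \<le> real K * (1 + \<tau>1 - \<tau>2)"
  proof (rule ccontr)
    assume neg: "\<not> \<tau>2 \<le> real K * (1 + \<tau>1 - \<tau>2)"
    define c where "c = 1 + \<tau>1 - \<tau>2"
    have c1: "c \<ge> 1" using le12 by (simp add: c_def)
    have KcK: "real K \<le> real K * c" using c1 by (simp add: mult_left_mono[of 1 c "real K", simplified])
    have gtK: "\<tau>2 > real K" using neg KcK by (simp add: c_def)
    define \<Delta> where "\<Delta> = \<tau>2 - real K * c"
    have Dpos: "\<Delta> > 0" using neg by (simp add: \<Delta>_def c_def)
    define \<eta> where "\<eta> = min (\<Delta> / (2 * (2 * real K + 1))) ((\<tau>2 - real K) / 2)"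
    have etapos: "\<eta> > 0" using Dpos gtK by (simp add: \<eta>_def)
    have eta1: "(2 * real K + 1) * \<eta> \<le> \<Delta> / 2"
    proof -
      have "\<eta> \<le> \<Delta> / (2 * (2 * real K + 1))" unfolding \<eta>_def by (rule min.cobounded1)
      then have "(2 * real K + 1) * \<eta> \<le> (2 * real K + 1) * (\<Delta> / (2 * (2 * real K + 1)))"
        by (intro mult_left_mono) auto
      also have "\<dots> = \<Delta> / 2" by (simp add: field_simps)
      finally show ?thesis .
    qed
    have eta2: "\<eta> \<le> (\<tau>2 - real K) / 2" unfolding \<eta>_def by (rule min.cobounded2)
    define a where "a = \<tau>1 + \<eta>"
    define b where "b = \<tau>2 - \<eta>"
    have bK: "b > real K" using eta2 gtK by (simp add: b_def)
    have bpos: "b > 0" using bK by (smt (verit) of_nat_0_le_iff)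
    have apos: "1 + a > 0" using tau_pos etapos by (simp add: a_def)
    define D4 where "D4 = (real K + 1) * b - real K * (1 + a)"
    have D4eq: "D4 = \<Delta> - (2 * real K + 1) * \<eta>"
      by (simp add: D4_def \<Delta>_def c_def a_def b_def algebra_simps)
    have D4pos: "D4 > 0" using D4eq eta1 Dpos by linarith

    have e1: "\<forall>\<^sub>F n in sequentially. \<bar>\<epsilon>1 n\<bar> < \<eta>"
      using tendstoD[OF eps1 etapos] by (simp add: dist_real_def)
    have e2: "\<forall>\<^sub>F n in sequentially. \<bar>\<epsilon>2 n\<bar> < \<eta>"
      using tendstoD[OF eps2 etapos] by (simp add: dist_real_def)
    obtain n0 where n0: "\<And>n. n \<ge> n0 \<Longrightarrow> (exp (- (\<tau>1 + \<epsilon>1 n) * \<sigma> n) \<le> \<bar>L n\<bar> \<and>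
        \<bar>L n\<bar> \<le> exp (- (\<tau>2 + \<epsilon>2 n) * \<sigma> (n + 1))) \<and> \<bar>\<epsilon>1 n\<bar> < \<eta> \<and> \<bar>\<epsilon>2 n\<bar> < \<eta> \<and> n \<ge> 1"
      using eventually_conj[OF bounds eventually_conj[OF e1 eventually_conj[OF e2 eventually_ge_at_top[of 1]]]]
      unfolding eventually_sequentially L_def by blast
    have n01: "n0 \<ge> 1" using n0 by blast
    have spos: "\<sigma> n > 0" if "n \<ge> n0" for n using that n01 sigma_pos by auto
    have lo: "exp (- a * \<sigma> n) \<le> \<bar>L n\<bar>" if "n \<ge> n0" for n
    proof -
      have "(\<tau>1 + \<epsilon>1 n) * \<sigma> n \<le> a * \<sigma> n"
        using n0[OF that] spos[OF that] by (intro mult_right_mono) (auto simp: a_def)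
      then have "exp (- a * \<sigma> n) \<le> exp (- (\<tau>1 + \<epsilon>1 n) * \<sigma> n)" by (simp add: algebra_simps)
      then show ?thesis using n0[OF that] by linarith
    qed
    have hi: "\<bar>L n\<bar> \<le> exp (- b * \<sigma> (n+1))" if "n \<ge> n0" for n
    proof -
      have "b * \<sigma> (n+1) \<le> (\<tau>2 + \<epsilon>2 n) * \<sigma> (n+1)"
        using n0[OF that] spos[of "n+1"] that by (intro mult_right_mono) (auto simp: b_def)
      then have "exp (- (\<tau>2 + \<epsilon>2 n) * \<sigma> (n+1)) \<le> exp (- b * \<sigma> (n+1))" by (simp add: algebra_simps)
      then show ?thesis using n0[OF that] by linarith
    qed

    define B where "B = \<bar>ln 2 + \<sigma> n0\<bar> + \<bar>(1 + a) * \<sigma> n0\<bar> + \<bar>(b + 1) * ln 2 / (b - real K)\<bar>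
        + \<bar>(1 + a) * ln 2 / D4\<bar> + \<bar>(1 + a) * ln 2 / b\<bar>"
    define Q where "Q = nat \<lceil>exp B\<rceil> + 1"
    have Q1: "Q \<ge> 1" by (simp add: Q_def)
    have Qpos: "real Q > 0" using Q1 by simp
    define lQ where "lQ = ln (real Q)"
    have lB: "lQ > B"
    proof -
      have "exp B < real Q" unfolding Q_def by linarith
      then have "ln (exp B) < ln (real Q)" using Qpos by (intro ln_less_cancel_iff[THEN iffD2]) auto
      then show ?thesis by (simp add: lQ_def)
    qed
    have R1: "lQ > ln 2 + \<sigma> n0" using lB unfolding B_def by linarith
    have R2: "lQ > (1 + a) * \<sigma> n0" using lB unfolding B_def by linarith
    have R3: "(b - real K) * lQ > (b + 1) * ln 2"
    proof -
      have "lQ > (b + 1) * ln 2 / (b - real K)" using lB unfolding B_def by linarith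
      then show ?thesis using bK by (simp add: pos_divide_less_eq mult.commute)
    qed
    have R4: "D4 * lQ > (1 + a) * ln 2"
    proof -
      have "lQ > (1 + a) * ln 2 / D4" using lB unfolding B_def by linarith
      then show ?thesis using D4pos by (simp add: pos_divide_less_eq mult.commute)
    qed
    have R5: "b * lQ > (1 + a) * ln 2"
    proof -
      have "lQ > (1 + a) * ln 2 / b" using lB unfolding B_def by linarith
      then show ?thesis using bpos by (simp add: pos_divide_less_eq mult.commute)
    qed

    obtain q :: nat and A0 :: "(nat \<Rightarrow> nat) \<Rightarrow> int" where q1: "1 \<le> q" and qQ: "q \<le> Q ^ K"
      and A0: "\<forall>\<alpha>\<in>M - {z}. \<bar>real q * x \<alpha> - A0 \<alpha>\<bar> \<le> 1 / Q"
      using dirichlet[OF finI Q1, of x] cardI by blast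
    define A where "A = (\<lambda>\<alpha>. if \<alpha> = z then int q else A0 \<alpha>)"
    have Aerr: "\<bar>real q * x \<alpha> - A \<alpha>\<bar> \<le> 1 / Q" if "\<alpha> \<in> M" for \<alpha>
      using A0 that Qpos by (cases "\<alpha> = z") (auto simp: A_def xz)
    define u where "u = ln (real q)"
    have u0: "u \<ge> 0" using q1 by (simp add: u_def)
    have uK: "u \<le> real K * lQ"
    proof -
      have "real q \<le> real Q ^ K" using qQ by (metis of_nat_le_iff of_nat_power)
      then have "ln (real q) \<le> ln (real Q ^ K)" using q1 Q1 by (intro ln_le_cancel_iff[THEN iffD2]) auto
      then show ?thesis using Qpos by (simp add: u_def lQ_def ln_realpow)
    qed
    have qexp: "real q = exp u" using q1 by (simp add: u_def)
    have Qexp: "real Q = exp lQ" using Qpos by (simp add: lQ_def)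

    have exn: "\<exists>n. n \<ge> n0 \<and> real q * exp (- b * \<sigma> (n+1)) < 1/2"
    proof -
      have "\<forall>\<^sub>F n in sequentially. (ln 2 + u + 1) / b \<le> \<sigma> n"
        using sigma_lim by (simp add: filterlim_at_top)
      then obtain N where N: "\<And>n. n \<ge> N \<Longrightarrow> (ln 2 + u + 1) / b \<le> \<sigma> n"
        unfolding eventually_sequentially by blast
      define m where "m = max n0 N"
      have "(ln 2 + u + 1) / b \<le> \<sigma> (m+1)" using N by (simp add: m_def)
      then have h: "ln 2 + u + 1 \<le> b * \<sigma> (m+1)" using bpos by (simp add: pos_divide_le_eq mult.commute)
      have "real q * exp (- b * \<sigma> (m+1)) = exp (u - b * \<sigma> (m+1))"
        by (simp add: qexp exp_diff exp_minus field_simps)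
      also have "\<dots> \<le> exp (- ln 2 - 1)" using h by simp
      also have "\<dots> < exp (- ln 2)" by simp
      also have "\<dots> = 1/2" by (simp add: exp_minus)
      finally show ?thesis by (intro exI[of _ m]) (simp add: m_def)
    qed
    define n where "n = (LEAST n. n \<ge> n0 \<and> real q * exp (- b * \<sigma> (n+1)) < 1/2)"
    have nprop: "n \<ge> n0 \<and> real q * exp (- b * \<sigma> (n+1)) < 1/2"
      unfolding n_def using exn by (rule LeastI_ex)
    have nn0: "n \<ge> n0" using nprop by blast
    define s where "s = \<sigma> n"
    have sp: "s > 0" using spos[OF nn0] by (simp add: s_def)
    have scase: "s \<le> \<sigma> n0 \<or> b * s \<le> ln 2 + u"
    proof (cases "n = n0")
      case True then show ?thesis by (simp add: s_def)
    next
      case False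
      then have "n - 1 \<ge> n0" "n - 1 < n" using nn0 by auto
      then have "\<not> (real q * exp (- b * \<sigma> (n - 1 + 1)) < 1/2)"
        using not_less_Least[of "n - 1" "\<lambda>n. n \<ge> n0 \<and> real q * exp (- b * \<sigma> (n+1)) < 1/2"]
        unfolding n_def[symmetric] by blast
      moreover have "n - 1 + 1 = n" using False nn0 by simp
      ultimately have "1/2 \<le> exp (u - b * s)"
        by (simp add: s_def qexp exp_diff exp_minus field_simps)
      then have "exp (- ln 2) \<le> exp (u - b * s)" by (simp add: exp_minus)
      then have "- ln 2 \<le> u - b * s" by simp
      then show ?thesis by simp
    qed
    have qL: "real q * \<bar>L n\<bar> < 1/2"
    proof -
      have "real q * \<bar>L n\<bar> \<le> real q * exp (- b * \<sigma> (n+1))"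
        using hi[OF nn0] by (intro mult_left_mono) auto
      then show ?thesis using nprop by linarith
    qed
    have qLlo: "exp (u - a * s) \<le> real q * \<bar>L n\<bar>"
      using lo[OF nn0] q1 by (simp add: s_def qexp exp_diff exp_minus field_simps)

    define S where "S = (\<Sum>\<alpha>\<in>M. P n \<alpha> * A \<alpha>)"
    have err: "\<bar>real q * L n - real_of_int S\<bar> \<le> exp s / Q"
    proof -
      have "real q * L n - real_of_int S = (\<Sum>\<alpha>\<in>M. real_of_int (P n \<alpha>) * (real q * x \<alpha> - A \<alpha>))"
        by (simp add: L_eq S_def sum_distrib_left sum_subtractf algebra_simps)
      also have "\<bar>\<dots>\<bar> \<le> (\<Sum>\<alpha>\<in>M. \<bar>real_of_int (P n \<alpha>) * (real q * x \<alpha> - A \<alpha>)\<bar>)"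
        by (rule sum_abs)
      also have "\<dots> \<le> (\<Sum>\<alpha>\<in>M. real_of_int \<bar>P n \<alpha>\<bar> * (1 / Q))"
      proof (rule sum_mono)
        fix \<alpha> assume "\<alpha> \<in> M"
        then show "\<bar>real_of_int (P n \<alpha>) * (real q * x \<alpha> - A \<alpha>)\<bar> \<le> real_of_int \<bar>P n \<alpha>\<bar> * (1 / Q)"
          using mult_left_mono[OF Aerr[of \<alpha>], of "real_of_int \<bar>P n \<alpha>\<bar>"] by (simp add: abs_mult)
      qed
      also have "\<dots> = (\<Sum>\<alpha>\<in>M. real_of_int \<bar>P n \<alpha>\<bar>) / Q" by (simp add: sum_divide_distrib)
      also have "\<dots> \<le> exp s / Q"
        using len[of n] nn0 n01 Qpos by (intro divide_right_mono) (auto simp: s_def)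
      finally show ?thesis .
    qed
    have cases: "(u + lQ \<le> (1 + a) * s) \<or> (lQ < ln 2 + s)"
    proof (cases "S = 0")
      case True
      then have "real q * \<bar>L n\<bar> \<le> exp s / Q" using err by (simp add: abs_mult)
      then have "exp (u - a * s) \<le> exp s / exp lQ" using qLlo Qexp by simp
      then have "exp (u - a * s) \<le> exp (s - lQ)" by (simp add: exp_diff)
      then have "u - a * s \<le> s - lQ" by simp
      then show ?thesis by (simp add: algebra_simps)
    next
      case False
      then have "1 \<le> \<bar>real_of_int S\<bar>" by linarith
      moreover have "\<bar>real q * L n\<bar> < 1/2" using qL by (simp add: abs_mult)
      ultimately have "1/2 < exp s / Q" using err by linarith
      then have "exp lQ < 2 * exp s" using Qexp Qpos by (simp add: field_simps)
      also have "\<dots> = exp (ln 2 + s)" by (simp add: exp_add)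
      finally have "lQ < ln 2 + s" by simp
      then show ?thesis by simp
    qed
    show False
    proof (cases "s \<le> \<sigma> n0")
      case True
      have "(1 + a) * s \<le> (1 + a) * \<sigma> n0" using True apos by (intro mult_left_mono) auto
      then show False using cases R1 R2 True u0 by linarith
    next
      case False
      then have bs: "b * s \<le> ln 2 + u" using scase by simp
      show False using cases
      proof
        assume h: "lQ < ln 2 + s"
        have "b * lQ < b * (ln 2 + s)" using h bpos by (intro mult_strict_left_mono) auto
        then have "b * lQ < b * ln 2 + ln 2 + real K * lQ" using bs uK by (simp add: algebra_simps)
        moreover have "(b - real K) * lQ = b * lQ - real K * lQ" by (simp add: algebra_simps)
        ultimately show False using R3 by (simp add: algebra_simps)
      next
        assume h: "u + lQ \<le> (1 + a) * s"
        have "b * (u + lQ) \<le> b * ((1 + a) * s)" using h bpos by (intro mult_left_mono) auto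
        also have "\<dots> = (1 + a) * (b * s)" by simp
        also have "\<dots> \<le> (1 + a) * (ln 2 + u)" using bs apos by (intro mult_left_mono) auto
        finally have m: "b * lQ \<le> (1 + a) * ln 2 + (1 + a - b) * u" by (simp add: algebra_simps)
        show False
        proof (cases "1 + a - b \<le> 0")
          case True
          then have "(1 + a - b) * u \<le> 0" using u0 by (simp add: mult_nonpos_nonneg)
          then show False using m R5 by linarith
        next
          case False
          then have "(1 + a - b) * u \<le> (1 + a - b) * (real K * lQ)" using uK by (intro mult_left_mono) auto
          moreover have "D4 * lQ = b * lQ - (1 + a - b) * (real K * lQ)"
            by (simp add: D4_def algebra_simps)
          ultimately show False using m R4 by linarith
        qed
      qed
    qed
  qed
  have "real ((d + t) choose t) - 1 = real K"
  proof -
    have "card M \<noteq> 0" using finM zM by auto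
    have "0 < (d + t choose t)" by (rule zero_less_binomial) simp
    then have "(d + t choose t) \<ge> 1" by linarith
    then show ?thesis unfolding K_def cardM by (simp add: of_nat_diff)
  qed
  then show ?thesis using main by simp
qed

end
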